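(* Let $\lambda<\kappa$ be infinite cardinals and let $X$, $Y$ be non-trivial Banach spaces. Suppose $X$ is $\mathrm{ASQ}_{<\kappa}$ (respectively, $\mathrm{SQ}_{<\kappa}$). (a) If $H\subset L_\lambda(Y,X)$ is a closed subspace containing all operators $y^*\otimes x$ with $y^*\in Y^*$, $x\in X$, then $H$ is $\mathrm{ASQ}_{<\kappa}$ (respectively, $\mathrm{SQ}_{<\kappa}$). (b) If $H\subset L_\lambda(Y^*,X)$ is a closed subspace containing all operators $y\otimes x$ with $y\in Y$, $x\in X$, then $H$ is $\mathrm{ASQ}_{<\kappa}$ (respectively, $\mathrm{SQ}_{<\kappa}$).
   Context: $L_\lambda(Y,X)=\{T\in L(Y,X):\mathrm{dens}(T(Y))\le\lambda\}$ with the operator norm, where $\mathrm{dens}$ is the density character. For $y^*\in Y^*$ and $x\in X$, $y^*\otimes x$ is the operator $y\mapsto y^*(y)x$; for $y\in Y$, $y\otimes x$ is the operator $Y^*\ni y^*\mapsto y^*(y)x$. A Banach space $Z$ is $\mathrm{ASQ}_{<\kappa}$ if for every set $A\subset S_Z$ with $|A|<\kappa$ and every $\varepsilon>0$ there exists $y\in S_Z$ with $\|x\pm y\|\le 1+\varepsilon$ for all $x\in A$; $Z$ is $\mathrm{SQ}_{<\kappa}$ if for every such $A$ there exists $y\in S_Z$ with $\|x\pm y\|\le 1$ for all $x\in A$. *)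

theory Defs
  imports "HOL-Analysis.Analysis"
begin


text \<open>Cardinals are represented by (nonempty) sets of arbitrary type; comparison of
cardinalities uses the BNF cardinal order: |A| \<le>o |L| means card A \<le> card L.\<close>

definition dens_le :: "'a::metric_space set \<Rightarrow> 'l set \<Rightarrow> bool" where
  "dens_le S L \<longleftrightarrow> (\<exists>D\<subseteq>S. S \<subseteq> closure D \<and> ordLeq3 (card_of D) (card_of L))"

definition L_dens :: "'l set \<Rightarrow> ('y::real_normed_vector \<Rightarrow>\<^sub>L 'x::real_normed_vector) set" where
  "L_dens L = {T. dens_le (range (blinfun_apply T)) L}"

definition dual_tensor :: "('y::real_normed_vector \<Rightarrow>\<^sub>L real) \<Rightarrow> 'x::real_normed_vector \<Rightarrow> ('y \<Rightarrow>\<^sub>L 'x)" where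
  "dual_tensor ys x = Blinfun (\<lambda>y. blinfun_apply ys y *\<^sub>R x)"

definition point_tensor :: "'y::real_normed_vector \<Rightarrow> 'x::real_normed_vector \<Rightarrow> (('y \<Rightarrow>\<^sub>L real) \<Rightarrow>\<^sub>L 'x)" where
  "point_tensor y x = Blinfun (\<lambda>ys. blinfun_apply ys y *\<^sub>R x)"

definition ASQ_lt :: "'a::real_normed_vector set \<Rightarrow> 'k set \<Rightarrow> bool" where
  "ASQ_lt Z K \<longleftrightarrow> (\<forall>A. A \<subseteq> Z \<inter> sphere 0 1 \<longrightarrow> ordLess2 (card_of A) (card_of K) \<longrightarrow>
     (\<forall>\<epsilon>>0. \<exists>y\<in>Z \<inter> sphere 0 1. \<forall>x\<in>A. norm (x + y) \<le> 1 + \<epsilon> \<and> norm (x - y) \<le> 1 + \<epsilon>))"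

definition SQ_lt :: "'a::real_normed_vector set \<Rightarrow> 'k set \<Rightarrow> bool" where
  "SQ_lt Z K \<longleftrightarrow> (\<forall>A. A \<subseteq> Z \<inter> sphere 0 1 \<longrightarrow> ordLess2 (card_of A) (card_of K) \<longrightarrow>
     (\<exists>y\<in>Z \<inter> sphere 0 1. \<forall>x\<in>A. norm (x + y) \<le> 1 \<and> norm (x - y) \<le> 1))"

end

theory Submission
  imports Defs
begin


definition goodG :: "('a::real_normed_vector \<times> real) set \<Rightarrow> bool" where
  "goodG G \<longleftrightarrow> (0,0) \<in> G \<and> (\<forall>x a y b. (x,a)\<in>G \<longrightarrow> (y,b)\<in>G \<longrightarrow> (x+y,a+b)\<in>G)
     \<and> (\<forall>x a c. (x,a)\<in>G \<longrightarrow> (c *\<^sub>R x, c*a) \<in> G) \<and> (\<forall>x a. (x,a)\<in>G \<longrightarrow> a \<le> norm x)"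

lemma goodG_fun:
  assumes "goodG G" "(x,a)\<in>G" "(x,b)\<in>G" shows "a = b"
proof -
  have add: "\<And>x a y b. (x,a)\<in>G \<Longrightarrow> (y,b)\<in>G \<Longrightarrow> (x+y,a+b)\<in>G"
    and sc: "\<And>x a c. (x,a)\<in>G \<Longrightarrow> (c *\<^sub>R x, c*a) \<in> G"
    and le: "\<And>x a. (x,a)\<in>G \<Longrightarrow> a \<le> norm x" using assms(1) unfolding goodG_def by blast+
  have "(x + (-1) *\<^sub>R x, a + (-1)*b) \<in> G" by (rule add[OF assms(2) sc[OF assms(3)]])
  then have 1: "a - b \<le> 0" using le by fastforce
  have "(x + (-1) *\<^sub>R x, b + (-1)*a) \<in> G" by (rule add[OF assms(3) sc[OF assms(2)]])
  then have 2: "b - a \<le> 0" using le by fastforce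
  from 1 2 show ?thesis by simp
qed

lemma goodG_extend:
  assumes g: "goodG G" and z: "\<forall>c. (z,c) \<notin> G"
  shows "\<exists>G'. goodG G' \<and> G \<subseteq> G' \<and> G' \<noteq> G"
proof -
  have g0: "(0,0)\<in>G" and gadd: "\<And>x a y b. (x,a)\<in>G \<Longrightarrow> (y,b)\<in>G \<Longrightarrow> (x+y,a+b)\<in>G"
    and gsc: "\<And>x a c. (x,a)\<in>G \<Longrightarrow> (c *\<^sub>R x, c*a) \<in> G"
    and gle: "\<And>x a. (x,a)\<in>G \<Longrightarrow> a \<le> norm x" using g unfolding goodG_def by blast+
  define L where "L = (\<lambda>p. snd p - norm (fst p - z)) ` G"
  define c where "c = Sup L"
  have ub: "l \<le> norm (y + z) - b" if "l \<in> L" "(y,b)\<in>G" for l y b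
  proof -
    have "l \<in> (\<lambda>p. snd p - norm (fst p - z)) ` G" using that(1) L_def by simp
    then obtain p where p: "p \<in> G" "l = snd p - norm (fst p - z)" by (rule imageE) simp
    obtain x a where "p = (x,a)" by (cases p)
    with p have xa: "(x,a)\<in>G" "l = a - norm (x - z)" by auto
    have "a + b \<le> norm (x + y)" using gle[OF gadd[OF xa(1) that(2)]] .
    also have "\<dots> \<le> norm (x - z) + norm (y + z)"
      using norm_triangle_ineq[of "x - z" "y + z"] by simp
    finally show ?thesis using xa by simp
  qed
  have Lne: "L \<noteq> {}" using g0 unfolding L_def by auto
  have bdd: "bdd_above L" using ub[OF _ g0] unfolding bdd_above_def by blast
  have c1: "c \<le> norm (y + z) - b" if "(y,b)\<in>G" for y b
    unfolding c_def using Lne ub[OF _ that] by (intro cSup_least) auto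
  have c2: "a - norm (x - z) \<le> c" if "(x,a)\<in>G" for x a
    unfolding c_def using bdd that unfolding L_def by (intro cSup_upper) force+
  define G' where "G' = {(x + t *\<^sub>R z, a + t * c) | x a t. (x,a)\<in>G}"
  have key: "a + t * c \<le> norm (x + t *\<^sub>R z)" if "(x,a)\<in>G" for x a t
  proof (cases t "0::real" rule: linorder_cases)
    case less
    define s where "s = - t"
    have s: "s > 0" using less s_def by simp
    have "(inverse s *\<^sub>R x, inverse s * a) \<in> G" using gsc[OF that] .
    from c2[OF this] have "inverse s * a - norm (inverse s *\<^sub>R x - z) \<le> c" .
    then have "s * (inverse s * a - norm (inverse s *\<^sub>R x - z)) \<le> s * c"
      using s by (simp add: mult_left_mono)
    moreover have "s * norm (inverse s *\<^sub>R x - z) = norm (x - s *\<^sub>R z)"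
    proof -
      have "x - s *\<^sub>R z = s *\<^sub>R (inverse s *\<^sub>R x - z)" using s by (simp add: algebra_simps)
      then show ?thesis using s by simp
    qed
    ultimately show ?thesis using s s_def by (simp add: algebra_simps)
  next
    case equal then show ?thesis using gle[OF that] by simp
  next
    case greater
    have "(inverse t *\<^sub>R x, inverse t * a) \<in> G" using gsc[OF that] .
    from c1[OF this] have "c \<le> norm (inverse t *\<^sub>R x + z) - inverse t * a" .
    then have "t * c \<le> t * (norm (inverse t *\<^sub>R x + z) - inverse t * a)"
      using greater by (simp add: mult_left_mono)
    moreover have "t * norm (inverse t *\<^sub>R x + z) = norm (x + t *\<^sub>R z)"
    proof -
      have "x + t *\<^sub>R z = t *\<^sub>R (inverse t *\<^sub>R x + z)" using greater by (simp add: algebra_simps)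
      then show ?thesis using greater by simp
    qed
    ultimately show ?thesis using greater by (simp add: algebra_simps)
  qed
  have "goodG G'"
    unfolding goodG_def
  proof (intro conjI allI impI)
    show "(0,0) \<in> G'" unfolding G'_def using g0 by force
  next
    fix x a y b assume "(x,a)\<in>G'" "(y,b)\<in>G'"
    then obtain x1 a1 t1 x2 a2 t2 where "(x1,a1)\<in>G" "(x2,a2)\<in>G" "x = x1 + t1 *\<^sub>R z" "a = a1 + t1*c"
      "y = x2 + t2 *\<^sub>R z" "b = a2 + t2*c" unfolding G'_def by blast
    then have "(x1+x2, a1+a2) \<in> G" "x+y = (x1+x2) + (t1+t2) *\<^sub>R z" "a+b = (a1+a2) + (t1+t2)*c"
      by (auto intro: gadd simp: algebra_simps)
    then show "(x+y,a+b)\<in>G'" unfolding G'_def by blast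
  next
    fix x a d assume "(x,a)\<in>G'"
    then obtain x1 a1 t1 where "(x1,a1)\<in>G" "x = x1 + t1 *\<^sub>R z" "a = a1 + t1*c"
      unfolding G'_def by blast
    then have "(d *\<^sub>R x1, d*a1) \<in> G" "d *\<^sub>R x = d *\<^sub>R x1 + (d*t1) *\<^sub>R z" "d*a = d*a1 + (d*t1)*c"
      using gsc by (auto simp: algebra_simps)
    then show "(d *\<^sub>R x, d*a)\<in>G'" unfolding G'_def by blast
  next
    fix x a assume "(x,a)\<in>G'"
    then show "a \<le> norm x" unfolding G'_def using key by auto
  qed
  moreover have "G \<subseteq> G'" unfolding G'_def by force
  moreover have "(z, c) \<in> G'"
  proof -
    have "z = 0 + 1 *\<^sub>R z" "c = 0 + 1 * c" by simp_all
    then show ?thesis unfolding G'_def using g0 by blast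
  qed
  ultimately show ?thesis using z by blast
qed

lemma goodG_0: "goodG G \<Longrightarrow> (0,0) \<in> G" unfolding goodG_def by blast
lemma goodG_add: "goodG G \<Longrightarrow> (x,a)\<in>G \<Longrightarrow> (y,b)\<in>G \<Longrightarrow> (x+y,a+b)\<in>G"
  unfolding goodG_def by blast
lemma goodG_sc: "goodG G \<Longrightarrow> (x,a)\<in>G \<Longrightarrow> (c *\<^sub>R x, c*a) \<in> G"
  unfolding goodG_def by blast
lemma goodG_le: "goodG G \<Longrightarrow> (x,a)\<in>G \<Longrightarrow> a \<le> norm x"
  unfolding goodG_def by blast
lemma goodGI:
  assumes "(0,0) \<in> G" "\<And>x a y b. (x,a)\<in>G \<Longrightarrow> (y,b)\<in>G \<Longrightarrow> (x+y,a+b)\<in>G"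
    "\<And>x a c. (x,a)\<in>G \<Longrightarrow> (c *\<^sub>R x, c*a) \<in> G" "\<And>x a. (x,a)\<in>G \<Longrightarrow> a \<le> norm x"
  shows "goodG G"
  unfolding goodG_def using assms by blast

lemma hahn_banach_norming:
  fixes y0 :: "'a::real_normed_vector"
  shows "\<exists>f::'a \<Rightarrow>\<^sub>L real. f y0 = norm y0 \<and> (\<forall>x. \<bar>f x\<bar> \<le> norm x)"
proof -
  define G0 where "G0 = {(t *\<^sub>R y0, t * norm y0) | t. True}"
  have G0I: "(t *\<^sub>R y0, t * norm y0) \<in> G0" for t unfolding G0_def by blast
  have G0E: "\<exists>t. x = t *\<^sub>R y0 \<and> a = t * norm y0" if "(x,a) \<in> G0" for x a
    using that unfolding G0_def by blast
  define \<A> where "\<A> = {G. goodG G \<and> G0 \<subseteq> G}"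
  have g0: "goodG G0"
  proof (rule goodGI)
    show "(0,0) \<in> G0" using G0I[of 0] by simp
  next
    fix x a y b assume "(x,a)\<in>G0" "(y,b)\<in>G0"
    then obtain t s where "x = t *\<^sub>R y0" "a = t * norm y0" "y = s *\<^sub>R y0" "b = s * norm y0"
      using G0E by blast
    then have e1: "x + y = (t+s) *\<^sub>R y0" and e2: "a + b = (t+s) * norm y0" by (simp_all add: algebra_simps)
    show "(x+y,a+b)\<in>G0" unfolding e1 e2 by (rule G0I)
  next
    fix x a d assume "(x,a)\<in>G0"
    then obtain t where "x = t *\<^sub>R y0" "a = t * norm y0" using G0E by blast
    then have e1: "d *\<^sub>R x = (d*t) *\<^sub>R y0" and e2: "d * a = (d*t) * norm y0" by (simp, simp add: mult.assoc)
    show "(d *\<^sub>R x, d*a)\<in>G0" unfolding e1 e2 by (rule G0I)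
  next
    fix x a assume "(x,a)\<in>G0"
    then obtain t where "x = t *\<^sub>R y0" "a = t * norm y0" using G0E by blast
    then show "a \<le> norm x" by (simp add: mult_right_mono)
  qed
  have "\<exists>M\<in>\<A>. \<forall>X\<in>\<A>. M \<subseteq> X \<longrightarrow> X = M"
  proof (rule Zorn_Lemma2, intro ballI)
    fix C assume C: "C \<in> chains \<A>"
    show "\<exists>U\<in>\<A>. \<forall>X\<in>C. X \<subseteq> U"
    proof (cases "C = {}")
      case True
      have "G0 \<in> \<A>" using g0 unfolding \<A>_def by simp
      then show ?thesis using True by blast
    next
      case False
      have CA: "C \<subseteq> \<A>" and ch: "\<And>X Y. X\<in>C \<Longrightarrow> Y\<in>C \<Longrightarrow> X \<subseteq> Y \<or> Y \<subseteq> X"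
        using C unfolding chains_def chain_subset_def by blast+
      have gd: "goodG X" "G0 \<subseteq> X" if "X \<in> C" for X using CA that unfolding \<A>_def by blast+
      obtain X0 where X0: "X0 \<in> C" using False by blast
      have "goodG (\<Union>C)"
      proof (rule goodGI)
        show "(0,0) \<in> \<Union>C" using goodG_0[OF gd(1)[OF X0]] X0 by blast
      next
        fix x a y b assume "(x,a) \<in> \<Union>C" "(y,b) \<in> \<Union>C"
        then obtain X Y where XY: "X\<in>C" "Y\<in>C" "(x,a)\<in>X" "(y,b)\<in>Y" by blast
        have "\<exists>Z\<in>C. (x,a)\<in>Z \<and> (y,b)\<in>Z"
        proof (cases "X \<subseteq> Y")
          case True then show ?thesis using XY by blast
        next
          case False then have "Y \<subseteq> X" using ch[OF XY(1,2)] by blast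
          then show ?thesis using XY by blast
        qed
        then obtain Z where Z: "Z \<in> C" "(x,a)\<in>Z" "(y,b)\<in>Z" by blast
        have "(x+y,a+b) \<in> Z" by (rule goodG_add[OF gd(1)[OF Z(1)] Z(2,3)])
        then show "(x+y,a+b) \<in> \<Union>C" using Z(1) by blast
      next
        fix x a d assume "(x,a) \<in> \<Union>C"
        then obtain X where X: "X\<in>C" "(x,a)\<in>X" by blast
        have "(d *\<^sub>R x, d*a) \<in> X" by (rule goodG_sc[OF gd(1)[OF X(1)] X(2)])
        then show "(d *\<^sub>R x, d*a) \<in> \<Union>C" using X(1) by blast
      next
        fix x a assume "(x,a) \<in> \<Union>C"
        then obtain X where X: "X\<in>C" "(x,a)\<in>X" by blast
        show "a \<le> norm x" by (rule goodG_le[OF gd(1)[OF X(1)] X(2)])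
      qed
      moreover have "G0 \<subseteq> \<Union>C" using gd(2)[OF X0] X0 by blast
      ultimately have "\<Union>C \<in> \<A>" unfolding \<A>_def by simp
      then show ?thesis by blast
    qed
  qed
  then obtain M where MA: "M \<in> \<A>" and mx0: "\<And>X. X \<in> \<A> \<Longrightarrow> M \<subseteq> X \<Longrightarrow> X = M"
    by blast
  have M: "goodG M" "G0 \<subseteq> M" using MA unfolding \<A>_def by simp_all
  have mx: "X = M" if "goodG X" "G0 \<subseteq> X" "M \<subseteq> X" for X
    using mx0[of X] that unfolding \<A>_def by simp
  have Madd: "\<And>x a y b. (x,a)\<in>M \<Longrightarrow> (y,b)\<in>M \<Longrightarrow> (x+y,a+b)\<in>M"
    and Msc: "\<And>x a c. (x,a)\<in>M \<Longrightarrow> (c *\<^sub>R x, c*a) \<in> M"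
    and Mle: "\<And>x a. (x,a)\<in>M \<Longrightarrow> a \<le> norm x"
    using goodG_add[OF M(1)] goodG_sc[OF M(1)] goodG_le[OF M(1)] by blast+
  have tot: "\<exists>a. (x,a)\<in>M" for x
  proof (rule ccontr)
    assume "\<nexists>a. (x, a) \<in> M"
    then have "\<forall>c. (x,c) \<notin> M" by blast
    from goodG_extend[OF M(1) this] obtain G' where G': "goodG G'" "M \<subseteq> G'" "G' \<noteq> M" by blast
    have "G0 \<subseteq> G'" using M(2) G'(2) by (rule subset_trans)
    then have "G' = M" using mx[OF G'(1) _ G'(2)] by simp
    then show False using G'(3) by simp
  qed
  define f where "f x = (SOME a. (x,a)\<in>M)" for x
  have fM: "(x, f x) \<in> M" for x unfolding f_def by (rule someI_ex[OF tot])
  have fu: "f x = a" if "(x,a)\<in>M" for x a using goodG_fun[OF M(1) that fM] by simp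
  have fadd: "f (x + y) = f x + f y" for x y by (rule fu[OF Madd[OF fM fM]])
  have fsc: "f (r *\<^sub>R x) = r * f x" for r x by (rule fu[OF Msc[OF fM]])
  have le: "f x \<le> norm x" for x by (rule Mle[OF fM])
  have ab: "\<bar>f x\<bar> \<le> norm x" for x
  proof -
    have "f (- x) = - f x" using fsc[of "-1" x] by simp
    then show ?thesis using le[of x] le[of "-x"] by simp
  qed
  have bl: "bounded_linear f"
  proof (rule bounded_linear_intro[where K=1])
    show "f (x + y) = f x + f y" for x y by (rule fadd)
    show "f (r *\<^sub>R x) = r *\<^sub>R f x" for r x using fsc by simp
    show "norm (f x) \<le> norm x * 1" for x using ab by simp
  qed
  have "(y0, norm y0) \<in> G0" using G0I[of 1] by simp
  then have fy0: "f y0 = norm y0" using M(2) fu by blast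
  have "blinfun_apply (Blinfun f) = f" by (rule bounded_linear_Blinfun_apply[OF bl])
  then show ?thesis using ab fy0 by (intro exI[of _ "Blinfun f"]) simp
qed

lemma closure_bound:
  fixes x :: "'x::real_normed_vector"
  assumes x: "norm x = 1" and e: "e \<ge> 0"
    and D: "\<forall>d\<in>D. d \<noteq> 0 \<longrightarrow> norm (d /\<^sub>R norm d + x) \<le> 1 + e"
  shows "\<forall>z\<in>closure D. norm (z + x) \<le> e + max 1 (norm z)"
proof -
  have "D \<subseteq> {z. norm (z + x) \<le> e + max 1 (norm z)}"
  proof
    fix d assume d: "d \<in> D"
    show "d \<in> {z. norm (z + x) \<le> e + max 1 (norm z)}"
    proof (cases "d = 0")
      case True then show ?thesis using x e by simp
    next
      case False
      define n where "n = norm d"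
      define b where "b = d /\<^sub>R n"
      have n: "n > 0" using False n_def by simp
      have bx: "norm (b + x) \<le> 1 + e" using D d False b_def n_def by auto
      have db: "d = n *\<^sub>R b" using n b_def by simp
      have nb: "norm b = 1" using n b_def n_def by simp
      show ?thesis
      proof (cases "n \<le> 1")
        case True
        have eq: "d + x = n *\<^sub>R (b + x) + (1 - n) *\<^sub>R x" unfolding db
          by (simp add: scaleR_add_right scaleR_diff_left)
        have "norm (d + x) \<le> norm (n *\<^sub>R (b + x)) + norm ((1 - n) *\<^sub>R x)"
          unfolding eq by (rule norm_triangle_ineq)
        also have "\<dots> = n * norm (b + x) + (1 - n)" using n True x by simp
        also have "\<dots> \<le> n * (1 + e) + (1 - n)" using bx n by (simp add: mult_left_mono)
        also have "\<dots> = 1 + n * e" by (simp add: algebra_simps)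
        also have "\<dots> \<le> 1 + e" using True e mult_right_mono[of n 1 e] by simp
        also have "\<dots> \<le> e + max 1 (norm d)" by simp
        finally show ?thesis by simp
      next
        case False
        have eq: "d + x = (b + x) + (n - 1) *\<^sub>R b" unfolding db
          by (simp add: scaleR_diff_left)
        have "norm (d + x) \<le> norm (b + x) + norm ((n - 1) *\<^sub>R b)"
          unfolding eq by (rule norm_triangle_ineq)
        also have "\<dots> = norm (b + x) + (n - 1)" using False nb by simp
        also have "\<dots> \<le> (1 + e) + (n - 1)" using bx by simp
        also have "\<dots> \<le> e + max 1 (norm d)" using n_def by simp
        finally show ?thesis by simp
      qed
    qed
  qed
  moreover have "closed {z. norm (z + x) \<le> e + max 1 (norm z)}"
    by (intro closed_Collect_le continuous_intros)
  ultimately have "closure D \<subseteq> {z. norm (z + x) \<le> e + max 1 (norm z)}"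
    by (rule closure_minimal)
  then show ?thesis by blast
qed

lemma convex_pm:
  fixes w x :: "'x::real_normed_vector"
  assumes "norm (w + x) \<le> r" "norm (w - x) \<le> r" "\<bar>t\<bar> \<le> 1"
  shows "norm (w + t *\<^sub>R x) \<le> r"
proof -
  define p where "p = (1 + t) / 2"
  define q where "q = (1 - t) / 2"
  have p: "p \<ge> 0" and q: "q \<ge> 0" using assms(3) unfolding p_def q_def by auto
  have pq1: "p + q = 1" and pq2: "p - q = t" unfolding p_def q_def by (simp_all add: field_simps)
  have "p *\<^sub>R (w + x) + q *\<^sub>R (w - x) = (p + q) *\<^sub>R w + (p - q) *\<^sub>R x"
    by (simp add: scaleR_add_right scaleR_diff_right scaleR_add_left scaleR_diff_left)
  then have eq: "w + t *\<^sub>R x = p *\<^sub>R (w + x) + q *\<^sub>R (w - x)" unfolding pq1 pq2 by simp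
  have "norm (w + t *\<^sub>R x) \<le> norm (p *\<^sub>R (w + x)) + norm (q *\<^sub>R (w - x))"
    unfolding eq by (rule norm_triangle_ineq)
  also have "\<dots> = p * norm (w + x) + q * norm (w - x)" using p q by simp
  also have "\<dots> \<le> p * r + q * r"
    using assms p q by (intro add_mono mult_left_mono) auto
  also have "\<dots> = r" using pq1 by (simp add: distrib_right[symmetric])
  finally show ?thesis .
qed

lemma core:
  fixes T S :: "'d::real_normed_vector \<Rightarrow>\<^sub>L 'x::real_normed_vector"
  assumes x: "norm x = 1" and e: "e \<ge> 0"
    and D: "\<forall>d\<in>D. d \<noteq> 0 \<longrightarrow> norm (d /\<^sub>R norm d + x) \<le> 1 + e \<and> norm (d /\<^sub>R norm d - x) \<le> 1 + e"
    and T: "norm T = 1" "range (blinfun_apply T) \<subseteq> closure D"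
    and S: "\<forall>u. \<exists>t. blinfun_apply S u = t *\<^sub>R x \<and> \<bar>t\<bar> \<le> norm u"
  shows "norm (T + S) \<le> 1 + e \<and> norm (T - S) \<le> 1 + e"
proof -
  have c1: "\<forall>z\<in>closure D. norm (z + x) \<le> e + max 1 (norm z)"
    using closure_bound[OF x e] D by blast
  have c2: "\<forall>z\<in>closure D. norm (z + - x) \<le> e + max 1 (norm z)"
    using closure_bound[of "-x" e D] x e D by simp
  have pw: "norm (blinfun_apply T u + t *\<^sub>R x) \<le> (1 + e) * norm u" if t: "\<bar>t\<bar> \<le> norm u" for u t
  proof (cases "u = 0")
    case True then show ?thesis using t by simp
  next
    case False
    define n where "n = norm u"
    have n: "n > 0" using False n_def by simp
    define z where "z = blinfun_apply T (u /\<^sub>R n)"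
    have zD: "z \<in> closure D" using T(2) z_def by auto
    have "norm z \<le> norm T * norm (u /\<^sub>R n)" unfolding z_def by (rule norm_blinfun)
    also have "\<dots> = 1" using T(1) n n_def by simp
    finally have z1: "norm z \<le> 1" .
    have mz: "max 1 (norm z) = 1" using z1 by simp
    have "norm (z + x) \<le> e + max 1 (norm z)" using c1 zD by blast
    then have zp: "norm (z + x) \<le> 1 + e" using mz by simp
    have "norm (z + - x) \<le> e + max 1 (norm z)" using c2 zD by blast
    then have zm: "norm (z - x) \<le> 1 + e" using mz by simp
    have tn: "\<bar>t\<bar> \<le> n" using t n_def by simp
    have s: "\<bar>t / n\<bar> \<le> 1"
    proof -
      have "\<bar>t / n\<bar> = \<bar>t\<bar> / n" using n by (simp add: abs_divide)
      also have "\<dots> \<le> 1" using tn n by (simp add: pos_divide_le_eq)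
      finally show ?thesis .
    qed
    have "norm (z + (t/n) *\<^sub>R x) \<le> 1 + e" by (rule convex_pm[OF zp zm s])
    moreover have "blinfun_apply T u + t *\<^sub>R x = n *\<^sub>R (z + (t/n) *\<^sub>R x)"
    proof -
      have "z = inverse n *\<^sub>R blinfun_apply T u" unfolding z_def by (simp add: blinfun.scaleR_right)
      then have 1: "n *\<^sub>R z = blinfun_apply T u" using n by simp
      have 2: "n *\<^sub>R ((t/n) *\<^sub>R x) = t *\<^sub>R x" using n by simp
      show ?thesis unfolding scaleR_add_right 1 2 ..
    qed
    then have "norm (blinfun_apply T u + t *\<^sub>R x) = n * norm (z + (t/n) *\<^sub>R x)"
      using n by simp
    ultimately show ?thesis using n n_def by (metis mult.commute mult_left_mono less_imp_le)
  qed
  have "norm (T + S) \<le> 1 + e"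
  proof (rule norm_blinfun_bound)
    fix u
    obtain t where "blinfun_apply S u = t *\<^sub>R x" "\<bar>t\<bar> \<le> norm u" using S by blast
    then show "norm (blinfun_apply (T + S) u) \<le> (1 + e) * norm u" using pw by (simp add: plus_blinfun.rep_eq)
  qed (use e in simp)
  moreover have "norm (T - S) \<le> 1 + e"
  proof (rule norm_blinfun_bound)
    fix u
    obtain t where "blinfun_apply S u = t *\<^sub>R x" "\<bar>t\<bar> \<le> norm u" using S by blast
    then show "norm (blinfun_apply (T - S) u) \<le> (1 + e) * norm u" using pw[of "-t" u]
      by (simp add: minus_blinfun.rep_eq)
  qed (use e in simp)
  ultimately show ?thesis ..
qed



context includes cardinal_syntax
begin

lemma card_part:
  fixes A :: "('d::real_normed_vector \<Rightarrow>\<^sub>L 'x::real_normed_vector) set" and Lam :: "'l set" and Kap :: "'k set"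
  assumes AL: "A \<subseteq> L_dens Lam" and AK: "|A| <o |Kap|" and Li: "infinite Lam" and LK: "|Lam| <o |Kap|"
  shows "\<exists>D. (\<forall>T\<in>A. range (blinfun_apply T) \<subseteq> closure D) \<and> |(\<lambda>d. d /\<^sub>R norm d) ` (D - {0})| <o |Kap|"
proof -
  have "\<forall>T\<in>A. \<exists>E. range (blinfun_apply T) \<subseteq> closure E \<and> |E| \<le>o |Lam|"
    using AL unfolding L_dens_def dens_le_def by blast
  then obtain F where F: "\<And>T. T\<in>A \<Longrightarrow> range (blinfun_apply T) \<subseteq> closure (F T) \<and> |F T| \<le>o |Lam|"
    by metis
  define D where "D = (\<Union>T\<in>A. F T)"
  have cl: "\<forall>T\<in>A. range (blinfun_apply T) \<subseteq> closure D"
  proof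
    fix T assume T: "T \<in> A"
    have "closure (F T) \<subseteq> closure D" unfolding D_def using T by (intro closure_mono) blast
    then show "range (blinfun_apply T) \<subseteq> closure D" using F[OF T] by blast
  qed
  have DK: "|D| <o |Kap|"
  proof (cases "|A| \<le>o |Lam|")
    case True
    have "|D| \<le>o |Lam|" unfolding D_def
      using card_of_UNION_ordLeq_infinite[OF Li True] F by blast
    then show ?thesis using LK by (rule ordLeq_ordLess_trans)
  next
    case False
    then have LA: "|Lam| \<le>o |A|"
      using ordLeq_total[OF card_of_Well_order card_of_Well_order] by blast
    have Ai: "infinite A" using card_of_ordLeq_infinite[OF LA] Li by blast
    have "\<forall>T\<in>A. |F T| \<le>o |A|" using F LA ordLeq_transitive by blast
    then have "|D| \<le>o |A|" unfolding D_def
      using card_of_UNION_ordLeq_infinite[OF Ai ordLeq_refl[OF card_of_Card_order]] by blast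
    then show ?thesis using AK by (rule ordLeq_ordLess_trans)
  qed
  have "|(\<lambda>d. d /\<^sub>R norm d) ` (D - {0})| \<le>o |D - {0}|" by (rule card_of_image)
  also have "|D - {0}| \<le>o |D|" by (rule card_of_mono1) blast
  finally show ?thesis using cl DK ordLeq_ordLess_trans by blast
qed

lemma transfer_gen:
  fixes H :: "('d::real_normed_vector \<Rightarrow>\<^sub>L 'x::real_normed_vector) set" and Lam :: "'l set" and Kap :: "'k set"
  assumes HL: "H \<subseteq> L_dens Lam" and Li: "infinite Lam" and LK: "|Lam| <o |Kap|"
    and Sx: "\<And>x. norm x = 1 \<Longrightarrow> \<exists>S\<in>H. norm S = 1 \<and> (\<forall>u. \<exists>t. blinfun_apply S u = t *\<^sub>R x \<and> \<bar>t\<bar> \<le> norm u)"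
  shows "(ASQ_lt (UNIV :: 'x set) Kap \<longrightarrow> ASQ_lt H Kap) \<and> (SQ_lt (UNIV :: 'x set) Kap \<longrightarrow> SQ_lt H Kap)"
proof -
  have main: "\<exists>S\<in>H \<inter> sphere 0 1. \<forall>T\<in>A. norm (T + S) \<le> 1 + e \<and> norm (T - S) \<le> 1 + e"
    if A: "A \<subseteq> H \<inter> sphere 0 1" "|A| <o |Kap|" and e: "e \<ge> 0"
      and X: "\<And>B::'x set. B \<subseteq> UNIV \<inter> sphere 0 1 \<Longrightarrow> |B| <o |Kap| \<Longrightarrow>
              \<exists>x\<in>UNIV \<inter> sphere 0 1. \<forall>b\<in>B. norm (b + x) \<le> 1 + e \<and> norm (b - x) \<le> 1 + e"
    for A e
  proof -
    obtain D where D: "\<forall>T\<in>A. range (blinfun_apply T) \<subseteq> closure D"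
      "|(\<lambda>d. d /\<^sub>R norm d) ` (D - {0})| <o |Kap|"
      using card_part[of A Lam Kap] A HL Li LK by blast
    have "(\<lambda>d. d /\<^sub>R norm d) ` (D - {0}) \<subseteq> UNIV \<inter> sphere 0 1"
    proof
      fix b assume "b \<in> (\<lambda>d. d /\<^sub>R norm d) ` (D - {0})"
      then obtain d where d: "d \<noteq> 0" "b = d /\<^sub>R norm d" by blast
      then show "b \<in> UNIV \<inter> sphere 0 1" by simp
    qed
    from X[OF this D(2)] obtain x where x: "norm x = 1"
      "\<forall>b\<in>(\<lambda>d. d /\<^sub>R norm d) ` (D - {0}). norm (b + x) \<le> 1 + e \<and> norm (b - x) \<le> 1 + e" by auto
    have Dc: "\<forall>d\<in>D. d \<noteq> 0 \<longrightarrow> norm (d /\<^sub>R norm d + x) \<le> 1 + e \<and> norm (d /\<^sub>R norm d - x) \<le> 1 + e"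
      using x(2) by blast
    obtain S where S: "S \<in> H" "norm S = 1" "\<forall>u. \<exists>t. blinfun_apply S u = t *\<^sub>R x \<and> \<bar>t\<bar> \<le> norm u"
      using Sx[OF x(1)] by blast
    have "\<forall>T\<in>A. norm (T + S) \<le> 1 + e \<and> norm (T - S) \<le> 1 + e"
    proof
      fix T assume T: "T \<in> A"
      have "norm T = 1" using A T by auto
      then show "norm (T + S) \<le> 1 + e \<and> norm (T - S) \<le> 1 + e"
        using core[OF x(1) e Dc _ _ S(3)] D(1) T by blast
    qed
    then show ?thesis using S by auto
  qed
  show ?thesis
  proof (intro conjI impI)
    assume X: "ASQ_lt (UNIV :: 'x set) Kap"
    show "ASQ_lt H Kap" unfolding ASQ_lt_def
    proof (intro allI impI)
      fix A :: "('d \<Rightarrow>\<^sub>L 'x) set" and \<epsilon> :: real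
      assume A1: "A \<subseteq> H \<inter> sphere 0 1" and A2: "|A| <o |Kap|" and ep: "0 < \<epsilon>"
      have XB: "\<exists>x\<in>UNIV \<inter> sphere 0 1. \<forall>b\<in>B. norm (b + x) \<le> 1 + \<epsilon> \<and> norm (b - x) \<le> 1 + \<epsilon>"
        if "B \<subseteq> UNIV \<inter> sphere 0 1" "|B| <o |Kap|" for B :: "'x set"
        using X that ep unfolding ASQ_lt_def by blast
      show "\<exists>y\<in>H \<inter> sphere 0 1. \<forall>x\<in>A. norm (x + y) \<le> 1 + \<epsilon> \<and> norm (x - y) \<le> 1 + \<epsilon>"
        by (rule main[OF A1 A2 less_imp_le[OF ep] XB])
    qed
  next
    assume X: "SQ_lt (UNIV :: 'x set) Kap"
    show "SQ_lt H Kap" unfolding SQ_lt_def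
    proof (intro allI impI)
      fix A :: "('d \<Rightarrow>\<^sub>L 'x) set"
      assume A1: "A \<subseteq> H \<inter> sphere 0 1" and A2: "|A| <o |Kap|"
      have XB: "\<exists>x\<in>UNIV \<inter> sphere 0 1. \<forall>b\<in>B. norm (b + x) \<le> 1 + 0 \<and> norm (b - x) \<le> 1 + 0"
        if "B \<subseteq> UNIV \<inter> sphere 0 1" "|B| <o |Kap|" for B :: "'x set"
        using X that unfolding SQ_lt_def by simp
      have "\<exists>y\<in>H \<inter> sphere 0 1. \<forall>x\<in>A. norm (x + y) \<le> 1 + 0 \<and> norm (x - y) \<le> 1 + 0"
        by (rule main[OF A1 A2 order_refl XB])
      then show "\<exists>y\<in>H \<inter> sphere 0 1. \<forall>x\<in>A. norm (x + y) \<le> 1 \<and> norm (x - y) \<le> 1"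
        by simp
    qed
  qed
qed



end

lemma dual_tensor_apply: "blinfun_apply (dual_tensor f x) u = blinfun_apply f u *\<^sub>R x"
proof -
  have "bounded_linear (\<lambda>y. blinfun_apply f y *\<^sub>R x)"
    by (intro bounded_linear_compose[OF bounded_linear_scaleR_left] blinfun.bounded_linear_right)
  then show ?thesis unfolding dual_tensor_def using bounded_linear_Blinfun_apply by metis
qed

lemma point_tensor_apply: "blinfun_apply (point_tensor y x) g = blinfun_apply g y *\<^sub>R x"
proof -
  have "bounded_linear (\<lambda>g. blinfun_apply g y *\<^sub>R x)"
    by (intro bounded_linear_compose[OF bounded_linear_scaleR_left] blinfun.bounded_linear_left)
  then show ?thesis unfolding point_tensor_def using bounded_linear_Blinfun_apply by metis
qed

theorem theorem4p6:
  fixes Lam :: "'l set" and Kap :: "'k set"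
  assumes "infinite Lam" and "infinite Kap" and "ordLess2 (card_of Lam) (card_of Kap)"
    and "\<exists>x::'x::banach. x \<noteq> 0" and "\<exists>y::'y::banach. y \<noteq> 0"
  shows
    "(\<forall>H :: ('y \<Rightarrow>\<^sub>L 'x) set.
        closed H \<and> subspace H \<and> H \<subseteq> L_dens Lam \<and>
        (\<forall>ys x. dual_tensor ys x \<in> H) \<longrightarrow>
        (ASQ_lt (UNIV :: 'x set) Kap \<longrightarrow> ASQ_lt H Kap) \<and>
        (SQ_lt (UNIV :: 'x set) Kap \<longrightarrow> SQ_lt H Kap))
   \<and>
    (\<forall>H :: (('y \<Rightarrow>\<^sub>L real) \<Rightarrow>\<^sub>L 'x) set.
        closed H \<and> subspace H \<and> H \<subseteq> L_dens Lam \<and>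
        (\<forall>y x. point_tensor y x \<in> H) \<longrightarrow>
        (ASQ_lt (UNIV :: 'x set) Kap \<longrightarrow> ASQ_lt H Kap) \<and>
        (SQ_lt (UNIV :: 'x set) Kap \<longrightarrow> SQ_lt H Kap))"
proof -
  obtain y0 :: 'y where "y0 \<noteq> 0" using assms(5) by blast
  define u0 where "u0 = y0 /\<^sub>R norm y0"
  have u0: "norm u0 = 1" using \<open>y0 \<noteq> 0\<close> u0_def by simp
  obtain f :: "'y \<Rightarrow>\<^sub>L real" where f: "blinfun_apply f u0 = norm u0" "\<And>x. \<bar>blinfun_apply f x\<bar> \<le> norm x"
    using hahn_banach_norming by blast
  have fu0: "blinfun_apply f u0 = 1" using f u0 by simp
  have nf: "norm f \<le> 1" by (rule norm_blinfun_bound) (use f(2) in auto)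
  show ?thesis
  proof (rule conjI; intro allI impI)
    fix H :: "('y \<Rightarrow>\<^sub>L 'x) set"
    assume H: "closed H \<and> subspace H \<and> H \<subseteq> L_dens Lam \<and> (\<forall>ys x. dual_tensor ys x \<in> H)"
    show "(ASQ_lt (UNIV :: 'x set) Kap \<longrightarrow> ASQ_lt H Kap) \<and> (SQ_lt (UNIV :: 'x set) Kap \<longrightarrow> SQ_lt H Kap)"
    proof (rule transfer_gen[of H Lam Kap])
      fix x :: 'x assume x: "norm x = 1"
      define S where "S = dual_tensor f x"
      have Sa: "blinfun_apply S u = blinfun_apply f u *\<^sub>R x" for u
        unfolding S_def by (rule dual_tensor_apply)
      have "norm S \<le> 1" by (rule norm_blinfun_bound) (use Sa f(2) x in auto)
      moreover have "1 \<le> norm S"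
      proof -
        have "norm (blinfun_apply S u0) \<le> norm S * norm u0" by (rule norm_blinfun)
        then show ?thesis using Sa fu0 x u0 by simp
      qed
      moreover have "\<forall>u. \<exists>t. blinfun_apply S u = t *\<^sub>R x \<and> \<bar>t\<bar> \<le> norm u"
        using Sa f(2) by blast
      ultimately show "\<exists>S\<in>H. norm S = 1 \<and> (\<forall>u. \<exists>t. blinfun_apply S u = t *\<^sub>R x \<and> \<bar>t\<bar> \<le> norm u)"
        using H S_def by (intro bexI[of _ S]) auto
    qed (use H assms in auto)
  next
    fix H :: "(('y \<Rightarrow>\<^sub>L real) \<Rightarrow>\<^sub>L 'x) set"
    assume H: "closed H \<and> subspace H \<and> H \<subseteq> L_dens Lam \<and> (\<forall>y x. point_tensor y x \<in> H)"
    show "(ASQ_lt (UNIV :: 'x set) Kap \<longrightarrow> ASQ_lt H Kap) \<and> (SQ_lt (UNIV :: 'x set) Kap \<longrightarrow> SQ_lt H Kap)"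
    proof (rule transfer_gen[of H Lam Kap])
      fix x :: 'x assume x: "norm x = 1"
      define S where "S = point_tensor u0 x"
      have Sa: "blinfun_apply S g = blinfun_apply g u0 *\<^sub>R x" for g
        unfolding S_def by (rule point_tensor_apply)
      have gb: "\<bar>blinfun_apply g u0\<bar> \<le> norm g" for g :: "'y \<Rightarrow>\<^sub>L real"
        using norm_blinfun[of g u0] u0 by simp
      have "norm S \<le> 1" by (rule norm_blinfun_bound) (use Sa gb x in auto)
      moreover have "1 \<le> norm S"
      proof -
        have "norm (blinfun_apply S f) \<le> norm S * norm f" by (rule norm_blinfun)
        also have "\<dots> \<le> norm S" using nf by (simp add: mult_left_le)
        finally show ?thesis using Sa fu0 x by simp
      qed
      moreover have "\<forall>u. \<exists>t. blinfun_apply S u = t *\<^sub>R x \<and> \<bar>t\<bar> \<le> norm u"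
        using Sa gb by blast
      ultimately show "\<exists>S\<in>H. norm S = 1 \<and> (\<forall>u. \<exists>t. blinfun_apply S u = t *\<^sub>R x \<and> \<bar>t\<bar> \<le> norm u)"
        using H S_def by (intro bexI[of _ S]) auto
    qed (use H assms in auto)
  qed
qed

end
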